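(* Let $q>2$, $\sigma,B,K>0$, and let $X_1,\dots,X_n$ be independent mean-zero real-valued random variables with \[ \frac1n\sum_{i=1}^n\mathrm{Var}[X_i]\le\sigma^2,\qquad\frac1n\sum_{i=1}^n\mathbb{E}[|X_i|^q]\le B^q,\qquad\max_{1\le i\le n}|X_i|\le K\ \text{a.s.} \] Then for every $z>1$, \[ \mathbb{P}\Big(\frac1n\sum_{i=1}^nX_i\ge B\Big(\frac{\sigma^2}{B^2}\Big)^{\frac{q-1}{q-2}}\Psi^{-1}\Big[\Big(\frac{B^2}{\sigma^2}\Big)^{\frac q{q-2}}\frac{\ln z}n\Big]+\frac{B^q}{K^{q-1}}\Psi^{-1}\Big[\Big(\frac KB\Big)^q\frac{\ln z}n\Big]\Big)\le\frac1z. \]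
   Context: $\Psi(x)=(1+x)\ln(1+x)-x$ for $x\ge0$, and $\Psi^{-1}$ is its inverse on $[0,\infty)$. *)

theory Defs
  imports "HOL-Probability.Probability"
begin

definition Psi :: "real \<Rightarrow> real" where
  "Psi x = (1 + x) * ln (1 + x) - x"

definition Psi_inv :: "real \<Rightarrow> real" where
  "Psi_inv y = (THE x. 0 \<le> x \<and> Psi x = y)"

end

theory Submission
  imports Defs
begin

lemma exp_tail_sums:
  fixes v :: real
  shows "(\<lambda>i. v^(i+n) / fact (i+n)) sums (exp v - (\<Sum>i<n. v^i / fact i))"
proof -
  have "(\<lambda>i. v^i / fact i) sums exp v"
    using exp_converges[of v] by (simp add: divide_inverse mult.commute)
  then show ?thesis
    by (subst sums_iff_shift[where f="\<lambda>i. v^i / fact i"]) simp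
qed

lemma exp_tail_abs:
  fixes v :: real
  shows "exp v - (\<Sum>i<n. v^i / fact i) \<le> exp \<bar>v\<bar> - (\<Sum>i<n. \<bar>v\<bar>^i / fact i)"
proof (rule sums_le[OF _ exp_tail_sums exp_tail_sums])
  fix i show "v^(i+n) / fact (i+n) \<le> \<bar>v\<bar>^(i+n) / fact (i+n)"
    using abs_ge_self[of "v^(i+n)"] by (intro divide_right_mono) (simp_all add: power_abs)
qed

lemma exp_tail_nonneg:
  fixes u :: real assumes "u \<ge> 0"
  shows "0 \<le> exp u - (\<Sum>i<n. u^i / fact i)"
  by (rule sums_le[OF _ sums_zero exp_tail_sums]) (use assms in auto)

lemma exp_tail_scale:
  fixes s u :: real assumes "0 \<le> s" "s \<le> u" "0 < u"
  shows "exp s - (\<Sum>i<n. s^i / fact i) \<le> (s/u)^n * (exp u - (\<Sum>i<n. u^i / fact i))"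
proof (rule sums_le[OF _ exp_tail_sums sums_mult[OF exp_tail_sums]])
  fix i
  have r: "0 \<le> s/u" "s/u \<le> 1" using assms by auto
  have "s^(i+n) = (s/u)^(i+n) * u^(i+n)" using assms by (simp add: power_divide)
  also have "\<dots> \<le> (s/u)^n * u^(i+n)"
    using r assms by (intro mult_right_mono power_decreasing) auto
  finally have "s^(i+n) / fact (i+n) \<le> ((s/u)^n * u^(i+n)) / fact (i+n)"
    by (rule divide_right_mono) simp
  then show "s^(i+n) / fact (i+n) \<le> (s/u)^n * (u^(i+n) / fact (i+n))"
    by (simp only: times_divide_eq_right)
qed

lemma phi_convex:
  fixes a b :: real assumes "0 \<le> a" "a \<le> b" "0 < b"
  shows "exp a - 1 - a \<le> (a/b) * (exp b - 1 - b)"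
proof -
  have "exp ((1 - a/b) *\<^sub>R 0 + (a/b) *\<^sub>R b) \<le> (1 - a/b) * exp 0 + (a/b) * exp b"
    using assms by (intro convex_onD[OF exp_convex]) auto
  then have "exp a \<le> (1 - a/b) + (a/b) * exp b" using assms by simp
  moreover have "(a/b)*(exp b - 1 - b) = (a/b)*exp b - a/b - a" using assms by (simp add: field_simps)
  ultimately show ?thesis by linarith
qed

lemma interp_k:
  fixes t c q :: real and k :: nat
  assumes "t \<ge> 0" "c > 0" "q > 2" "2 \<le> k" "real k \<le> q"
  shows "t^k \<le> (q - real k)/(q-2) * (t^2 * c^(k-2)) + (real k - 2)/(q-2) * (t powr q * c powr (real k - q))"
proof (cases "t = 0")
  case True
  have "k \<noteq> 0" using assms by simp
  then show ?thesis using assms True by (simp add: power_0_left)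
next
  case False
  then have t: "t > 0" using assms by simp
  define a where "a = (q-k)/(q-2)"
  define b where "b = (real k-2)/(q-2)"
  define P where "P = t^2 * c^(k-2)"
  define Q where "Q = t powr q * c powr (real k - q)"
  have "a + b = ((q - real k) + (real k - 2))/(q-2)" unfolding a_def b_def by (rule add_divide_distrib[symmetric])
  also have "\<dots> = 1" using assms by simp
  finally have ab: "a \<ge> 0" "b \<ge> 0" "a + b = 1" using assms by (auto simp: a_def b_def)
  have PQ: "P > 0" "Q > 0" using t assms by (auto simp: P_def Q_def)
  have lnP: "ln P = 2 * ln t + real (k-2) * ln c" using t assms
    by (simp add: P_def ln_mult ln_realpow)
  have lnQ: "ln Q = q * ln t + (real k - q) * ln c" using t assms
    by (simp add: Q_def ln_mult)
  have kk: "real (k-2) = real k - 2" using assms by simp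
  have ha: "(q-2)*a = q - real k" "(q-2)*b = real k - 2" using assms by (auto simp: a_def b_def)
  have "(q-2) * (a * ln P + b * ln Q) = ((q-2)*a) * ln P + ((q-2)*b) * ln Q" by algebra
  also have "\<dots> = (q - real k) * (2 * ln t + (real k - 2) * ln c) + (real k - 2) * (q * ln t + (real k - q) * ln c)"
    unfolding ha lnP lnQ kk ..
  also have "\<dots> = (q-2) * (real k * ln t)" by algebra
  finally have "a * ln P + b * ln Q = real k * ln t" using assms by simp
  then have "P powr a * Q powr b = t^k"
    using PQ t by (simp add: powr_def exp_add[symmetric] ln_realpow[symmetric])
  moreover have "P powr a * Q powr b \<le> a * P + b * Q"
    by (rule Youngs_inequality_0) (use ab PQ in auto)
  ultimately show ?thesis by (simp add: a_def b_def P_def Q_def)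
qed

lemma le_floor_real: "k \<le> nat \<lfloor>q\<rfloor> \<Longrightarrow> 2 \<le> k \<Longrightarrow> real k \<le> (q::real)"
  by linarith

definition alphaC :: "real \<Rightarrow> real \<Rightarrow> real \<Rightarrow> real" where
  "alphaC q c lam = (\<Sum>k\<in>{2..nat \<lfloor>q\<rfloor>}. lam^k / fact k * ((q - k)/(q-2)) * c^(k-2))"

definition tailE :: "nat \<Rightarrow> real \<Rightarrow> real" where
  "tailE m u = exp u - (\<Sum>i<m. u^i / fact i)"

definition betaC :: "real \<Rightarrow> real \<Rightarrow> real \<Rightarrow> real \<Rightarrow> real" where
  "betaC q c K lam = (\<Sum>k\<in>{2..nat \<lfloor>q\<rfloor>}. lam^k / fact k * ((real k - 2)/(q-2)) * c powr (real k - q))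
      + tailE (Suc (nat \<lfloor>q\<rfloor>)) (lam*K) / K powr q"

lemma alphaC_nonneg: "q > 2 \<Longrightarrow> c > 0 \<Longrightarrow> lam \<ge> 0 \<Longrightarrow> alphaC q c lam \<ge> 0"
  unfolding alphaC_def
  by (intro sum_nonneg mult_nonneg_nonneg divide_nonneg_nonneg) (auto dest: le_floor_real)

lemma betaC_nonneg: "q > 2 \<Longrightarrow> c > 0 \<Longrightarrow> K > 0 \<Longrightarrow> lam \<ge> 0 \<Longrightarrow> betaC q c K lam \<ge> 0"
  unfolding betaC_def tailE_def
  by (intro add_nonneg_nonneg sum_nonneg mult_nonneg_nonneg divide_nonneg_nonneg exp_tail_nonneg) auto

lemma phi_split:
  fixes v :: real assumes "2 \<le> m"
  shows "exp v - 1 - v = (\<Sum>k\<in>{2..m}. v^k / fact k) + tailE (Suc m) v"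
proof -
  have "{..<Suc m} = insert 0 (insert 1 {2..m})" using assms by auto
  then show ?thesis unfolding tailE_def by simp
qed

lemma pointwise:
  fixes q c K lam t :: real
  assumes q: "q > 2" and c: "c > 0" and K: "K > 0" and lam: "lam \<ge> 0" and t: "0 \<le> t" "t \<le> K"
  shows "exp (lam*t) - 1 - lam*t \<le> alphaC q c lam * t^2 + betaC q c K lam * t powr q"
proof -
  define m where "m = nat \<lfloor>q\<rfloor>"
  have m2: "2 \<le> m" using q unfolding m_def by linarith
  have km: "real k \<le> q" if "k \<le> m" for k using that q unfolding m_def by linarith
  have mq: "q \<le> real (Suc m)" using q unfolding m_def by linarith
  have fin: "(\<Sum>k\<in>{2..m}. (lam*t)^k / fact k)
      \<le> (\<Sum>k\<in>{2..m}. lam^k / fact k * ((q - k)/(q-2) * (t^2 * c^(k-2)) + (real k - 2)/(q-2) * (t powr q * c powr (real k - q))))"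
  proof (rule sum_mono)
    fix k assume k: "k \<in> {2..m}"
    have "(lam*t)^k / fact k = lam^k / fact k * t^k" by (simp add: power_mult_distrib)
    also have "\<dots> \<le> lam^k / fact k * ((q - k)/(q-2) * (t^2 * c^(k-2)) + (real k - 2)/(q-2) * (t powr q * c powr (real k - q)))"
      using k km[of k] by (intro mult_left_mono interp_k) (use t c q lam in auto)
    finally show "(lam*t)^k / fact k \<le> \<dots>" .
  qed
  also have "\<dots> = alphaC q c lam * t^2 + (\<Sum>k\<in>{2..m}. lam^k / fact k * ((real k - 2)/(q-2)) * c powr (real k - q)) * t powr q"
  proof -
    have "(\<Sum>k\<in>{2..m}. lam^k / fact k * ((q - k)/(q-2) * (t^2 * c^(k-2)) + (real k - 2)/(q-2) * (t powr q * c powr (real k - q))))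
      = (\<Sum>k\<in>{2..m}. t^2 * (lam^k / fact k * ((q - k)/(q-2)) * c^(k-2)) + t powr q * (lam^k / fact k * ((real k - 2)/(q-2)) * c powr (real k - q)))"
    proof -
      have gen: "\<And>w A X P B Y Q::real. w * (A*(X*P) + B*(Y*Q)) = X*(w*A*P) + Y*(w*B*Q)"
        by (simp add: algebra_simps)
      show ?thesis by (intro sum.cong refl) (simp only: gen)
    qed
    also have "\<dots> = t^2 * (\<Sum>k\<in>{2..m}. lam^k / fact k * ((q - k)/(q-2)) * c^(k-2)) + t powr q * (\<Sum>k\<in>{2..m}. lam^k / fact k * ((real k - 2)/(q-2)) * c powr (real k - q))"
      by (simp add: sum.distrib sum_distrib_left)
    finally show ?thesis unfolding alphaC_def m_def[symmetric] by (simp add: mult_ac)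
  qed
  finally have fin' : "(\<Sum>k\<in>{2..m}. (lam*t)^k / fact k) \<le> \<dots>" .
  have tl: "tailE (Suc m) (lam*t) \<le> tailE (Suc m) (lam*K) / K powr q * t powr q"
  proof (cases "lam = 0")
    case True
    have "(\<Sum>i<Suc m. (0::real)^i / fact i) = 1" by (subst sum.lessThan_Suc_shift) simp
    then have "tailE (Suc m) 0 = 0" unfolding tailE_def by simp
    then show ?thesis using True by simp
  next
    case False
    then have l: "lam > 0" using lam by simp
    have "tailE (Suc m) (lam*t) \<le> (lam*t/(lam*K))^(Suc m) * tailE (Suc m) (lam*K)"
      unfolding tailE_def using l t K by (intro exp_tail_scale) (auto intro: mult_left_mono)
    also have "lam*t/(lam*K) = t/K" using l by simp
    also have "(t/K)^(Suc m) \<le> (t/K) powr q"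
    proof (cases "t = 0")
      case True then show ?thesis by simp
    next
      case False
      then have "(t/K)^(Suc m) = (t/K) powr (real (Suc m))" using powr_realpow[of "t/K" "Suc m"] t K False by (simp del: of_nat_Suc)
      also have "\<dots> \<le> (t/K) powr q" using t K mq by (intro powr_mono') auto
      finally show ?thesis .
    qed
    then have "(t/K)^(Suc m) * tailE (Suc m) (lam*K) \<le> (t/K) powr q * tailE (Suc m) (lam*K)"
      unfolding tailE_def using l K by (intro mult_right_mono exp_tail_nonneg) auto
    also have "\<dots> = tailE (Suc m) (lam*K) / K powr q * t powr q" using K t by (simp add: powr_divide)
    finally show ?thesis .
  qed
  have "exp (lam*t) - 1 - lam*t = (\<Sum>k\<in>{2..m}. (lam*t)^k / fact k) + tailE (Suc m) (lam*t)"
    by (rule phi_split[OF m2])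
  also have "\<dots> \<le> alphaC q c lam * t^2 + betaC q c K lam * t powr q"
    using fin' tl unfolding betaC_def m_def[symmetric] by (simp add: algebra_simps)
  finally show ?thesis .
qed

lemma Psi_deriv: "x > -1 \<Longrightarrow> (Psi has_real_derivative ln (1+x)) (at x)"
  unfolding Psi_def[abs_def]
  by (auto intro!: derivative_eq_intros simp: field_simps)

lemma Psi_strict: assumes "0 \<le> a" "a < b" shows "Psi a < Psi b"
proof -
  have d: "\<And>x. a \<le> x \<Longrightarrow> x \<le> b \<Longrightarrow> (Psi has_real_derivative ln (1+x)) (at x)"
    using assms by (auto intro!: Psi_deriv)
  obtain z where z: "a < z" "z < b" "Psi b - Psi a = (b - a) * ln (1+z)"
    using MVT2[OF assms(2) d] by blast
  have "ln (1+z) > 0" using z assms by simp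
  then show ?thesis using z mult_pos_pos[of "b-a" "ln (1+z)"] by linarith
qed

lemma Psi_zero: "Psi 0 = 0" by (simp add: Psi_def)

lemma Psi_ex1: assumes "y \<ge> 0" shows "\<exists>!x. 0 \<le> x \<and> Psi x = y"
proof -
  define b where "b = y + exp 2"
  have b: "b \<ge> 0" "1 + b \<ge> exp 2" using assms by (auto simp: b_def)
  have "ln (1+b) \<ge> 2" using b by (metis exp_gt_zero ln_exp ln_le_cancel_iff add_pos_nonneg zero_less_one)
  then have "(1+b) * ln (1+b) \<ge> (1+b) * 2" using b by (intro mult_left_mono) auto
  moreover have "Psi b = (1+b) * ln (1+b) - b" by (simp add: Psi_def)
  moreover have "(1+b)*2 = 2 + 2*b" by simp
  ultimately have "Psi b \<ge> y" using exp_gt_zero[of 2] b_def by linarith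
  moreover have "Psi 0 \<le> y" using assms Psi_zero by simp
  moreover have "\<forall>x. 0 \<le> x \<and> x \<le> b \<longrightarrow> isCont Psi x"
  proof (intro allI impI)
    fix x :: real assume "0 \<le> x \<and> x \<le> b"
    then have "x > -1" by simp
    then show "isCont Psi x" by (rule DERIV_isCont[OF Psi_deriv])
  qed
  ultimately obtain x where "0 \<le> x" "x \<le> b" "Psi x = y"
    using IVT[of Psi 0 y b] b by auto
  moreover have "x' = x" if "0 \<le> x'" "Psi x' = y" for x'
    using Psi_strict[of x x'] Psi_strict[of x' x] that \<open>0 \<le> x\<close> \<open>Psi x = y\<close>
    by (cases x x' rule: linorder_cases) auto
  ultimately show ?thesis by blast
qed

lemma Psi_inv: assumes "y \<ge> 0" shows "Psi_inv y \<ge> 0" "Psi (Psi_inv y) = y"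
  using theI'[OF Psi_ex1[OF assms]] unfolding Psi_inv_def by auto

lemma Psi_inv_pos: assumes "y > 0" shows "Psi_inv y > 0"
  using Psi_inv[of y] assms Psi_zero by (cases "Psi_inv y = 0") auto

lemma bennett_step:
  fixes v c L :: real
  assumes "v > 0" "c > 0" "L > 0"
  defines "y \<equiv> Psi_inv (c^2 * L / v)"
  defines "lam \<equiv> ln (1 + y) / c"
  shows "lam > 0" "(v/c^2) * (exp (lam*c) - 1 - lam*c) + L = lam * ((v/c) * y)"
proof -
  have y: "y > 0" "Psi y = c^2 * L / v" using Psi_inv_pos[of "c^2*L/v"] Psi_inv(2)[of "c^2*L/v"] assms
    by (auto simp: y_def)
  then show "lam > 0" using assms by (simp add: lam_def)
  have e: "exp (lam*c) = 1 + y" using y assms by (simp add: lam_def)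
  have L: "L = (v/c^2) * Psi y" using y assms by (simp add: field_simps)
  show "(v/c^2) * (exp (lam*c) - 1 - lam*c) + L = lam * ((v/c) * y)"
    unfolding L e Psi_def using assms by (simp add: lam_def field_simps power2_eq_square)
qed

lemma ratio_mono:
  fixes v c l1 l2 :: real
  assumes "v \<ge> 0" "c > 0" "0 < l1" "l1 \<le> l2"
  shows "(v/c^2) * (exp (l1*c) - 1 - l1*c) \<le> (l1/l2) * ((v/c^2) * (exp (l2*c) - 1 - l2*c))"
proof -
  have "exp (l1*c) - 1 - l1*c \<le> ((l1*c)/(l2*c)) * (exp (l2*c) - 1 - l2*c)"
    using assms by (intro phi_convex) (auto intro: mult_right_mono)
  also have "(l1*c)/(l2*c) = l1/l2" using assms by simp
  finally have "exp (l1*c) - 1 - l1*c \<le> (l1/l2) * (exp (l2*c) - 1 - l2*c)" .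
  then have "(v/c^2) * (exp (l1*c) - 1 - l1*c) \<le> (v/c^2) * ((l1/l2) * (exp (l2*c) - 1 - l2*c))"
    using assms by (intro mult_left_mono) auto
  then show ?thesis by (simp only: mult.left_commute)
qed

lemma combine:
  fixes v1 c1 v2 c2 L :: real
  assumes "v1 > 0" "c1 > 0" "v2 > 0" "c2 > 0" "L > 0"
  shows "\<exists>lam>0. (v1/c1^2) * (exp (lam*c1) - 1 - lam*c1) + (v2/c2^2) * (exp (lam*c2) - 1 - lam*c2) + L
     \<le> lam * ((v1/c1) * Psi_inv (c1^2 * L / v1) + (v2/c2) * Psi_inv (c2^2 * L / v2))"
proof -
  define G1 where "G1 l = (v1/c1^2) * (exp (l*c1) - 1 - l*c1)" for l
  define G2 where "G2 l = (v2/c2^2) * (exp (l*c2) - 1 - l*c2)" for l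
  define T1 where "T1 = (v1/c1) * Psi_inv (c1^2 * L / v1)"
  define T2 where "T2 = (v2/c2) * Psi_inv (c2^2 * L / v2)"
  define l1 where "l1 = ln (1 + Psi_inv (c1^2 * L / v1)) / c1"
  define l2 where "l2 = ln (1 + Psi_inv (c2^2 * L / v2)) / c2"
  have l1: "l1 > 0" "G1 l1 + L = l1 * T1"
    using bennett_step[of v1 c1 L] assms unfolding G1_def T1_def l1_def by auto
  have l2: "l2 > 0" "G2 l2 + L = l2 * T2"
    using bennett_step[of v2 c2 L] assms unfolding G2_def T2_def l2_def by auto
  show ?thesis
  proof (cases "l1 \<le> l2")
    case True
    have "G2 l1 \<le> (l1/l2) * G2 l2" unfolding G2_def using assms l1 True by (intro ratio_mono) auto
    also have "\<dots> \<le> (l1/l2) * (G2 l2 + L)" using assms l1 l2 by (intro mult_left_mono) auto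
    also have "\<dots> = l1 * T2" using l2 by simp
    finally have "G1 l1 + G2 l1 + L \<le> l1 * (T1 + T2)" using l1 by (simp add: algebra_simps)
    then show ?thesis using l1(1) unfolding G1_def G2_def T1_def T2_def by (intro exI[where x=l1]) simp
  next
    case False
    have "G1 l2 \<le> (l2/l1) * G1 l1" unfolding G1_def using assms l2 False by (intro ratio_mono) auto
    also have "\<dots> \<le> (l2/l1) * (G1 l1 + L)" using assms l1 l2 by (intro mult_left_mono) auto
    also have "\<dots> = l2 * T1" using l1 by simp
    finally have "G1 l2 + G2 l2 + L \<le> l2 * (T1 + T2)" using l2 by (simp add: algebra_simps)
    then show ?thesis using l2(1) unfolding G1_def G2_def T1_def T2_def by (intro exI[where x=l2]) simp
  qed
qed

lemma coef_bound:
  fixes q c1 s B K lam :: real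
  assumes q: "q > 2" and s: "s > 0" and B: "B > 0" and K: "K > 0" and lam: "lam \<ge> 0" and c1: "c1 > 0"
    and c1q: "c1 powr (q-2) = B powr q / s"
  shows "alphaC q c1 lam * s + betaC q c1 K lam * B powr q
     \<le> (s/c1^2) * (exp (lam*c1) - 1 - lam*c1) + (B powr q / K powr q) * (exp (lam*K) - 1 - lam*K)"
proof -
  define m where "m = nat \<lfloor>q\<rfloor>"
  have m2: "2 \<le> m" using q unfolding m_def by linarith
  have key: "c1 powr (real k - q) * B powr q = s * c1^(k-2)" if k: "2 \<le> k" for k :: nat
  proof -
    have "B powr q = s * c1 powr (q-2)" using c1q s by simp
    then have "c1 powr (real k - q) * B powr q = s * (c1 powr (real k - q) * c1 powr (q-2))" by simp
    also have "c1 powr (real k - q) * c1 powr (q-2) = c1 powr (real (k-2))"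
      using k by (simp add: powr_add[symmetric])
    also have "\<dots> = c1^(k-2)" using c1 by (simp add: powr_realpow)
    finally show ?thesis .
  qed
  have "alphaC q c1 lam * s + (\<Sum>k\<in>{2..m}. lam^k / fact k * ((real k - 2)/(q-2)) * c1 powr (real k - q)) * B powr q
      = (\<Sum>k\<in>{2..m}. lam^k / fact k * ((q - k)/(q-2)) * c1^(k-2) * s + lam^k / fact k * ((real k - 2)/(q-2)) * (c1 powr (real k - q) * B powr q))"
    unfolding alphaC_def m_def by (simp add: sum_distrib_right sum.distrib mult.assoc)
  also have "\<dots> = (\<Sum>k\<in>{2..m}. (s/c1^2) * ((lam*c1)^k / fact k))"
  proof (intro sum.cong refl)
    fix k assume "k \<in> {2..m}"
    then have k: "2 \<le> k" by simp
    have ck: "c1^k = c1^2 * c1^(k-2)" using k by (metis le_add_diff_inverse power_add)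
    have w0: "(q - k)/(q-2) + (real k - 2)/(q-2) = ((q - k) + (real k - 2))/(q-2)"
      by (rule add_divide_distrib[symmetric])
    have w: "(q - k)/(q-2) + (real k - 2)/(q-2) = 1" unfolding w0 using q by simp
    have "lam^k / fact k * ((q - k)/(q-2)) * c1^(k-2) * s + lam^k / fact k * ((real k - 2)/(q-2)) * (c1 powr (real k - q) * B powr q)
      = lam^k / fact k * c1^(k-2) * s * ((q - k)/(q-2) + (real k - 2)/(q-2))"
      unfolding key[OF k] by (simp add: algebra_simps)
    also have "\<dots> = lam^k / fact k * c1^(k-2) * s" unfolding w by simp
    also have "\<dots> = (s/c1^2) * ((lam*c1)^k / fact k)"
      using c1 by (simp add: power_mult_distrib ck field_simps)
    finally show "lam^k / fact k * ((q - k)/(q-2)) * c1^(k-2) * s + lam^k / fact k * ((real k - 2)/(q-2)) * (c1 powr (real k - q) * B powr q)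
      = (s/c1^2) * ((lam*c1)^k / fact k)" .
  qed
  also have "\<dots> = (s/c1^2) * (\<Sum>k\<in>{2..m}. (lam*c1)^k / fact k)"
    by (simp add: sum_distrib_left)
  also have "\<dots> \<le> (s/c1^2) * (exp (lam*c1) - 1 - lam*c1)"
    using phi_split[OF m2, of "lam*c1"] exp_tail_nonneg[of "lam*c1" "Suc m"] lam c1 s
    by (intro mult_left_mono) (auto simp: tailE_def)
  finally have A: "alphaC q c1 lam * s + (\<Sum>k\<in>{2..m}. lam^k / fact k * ((real k - 2)/(q-2)) * c1 powr (real k - q)) * B powr q
     \<le> (s/c1^2) * (exp (lam*c1) - 1 - lam*c1)" .
  have "0 \<le> (\<Sum>k\<in>{2..m}. (lam*K)^k / fact k)" using lam K by (intro sum_nonneg) auto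
  then have "tailE (Suc m) (lam*K) \<le> exp (lam*K) - 1 - lam*K" using phi_split[OF m2, of "lam*K"] by linarith
  then have Bt: "tailE (Suc m) (lam*K) / K powr q * B powr q \<le> (B powr q / K powr q) * (exp (lam*K) - 1 - lam*K)"
    using K B by (simp add: divide_right_mono mult_left_mono mult.commute[of _ "B powr q"] mult.assoc
       flip: times_divide_eq_right)
  show ?thesis using A Bt unfolding betaC_def m_def[symmetric] by (simp add: algebra_simps)
qed

lemma eq_by_ln: "(x::real) > 0 \<Longrightarrow> y > 0 \<Longrightarrow> ln x = ln y \<Longrightarrow> x = y"
  by simp

lemma alg_facts:
  fixes q \<sigma> B K :: real
  assumes q: "q > 2" and s: "\<sigma> > 0" and B: "B > 0" and K: "K > 0"
  defines "c1 \<equiv> B * (B\<^sup>2 / \<sigma>\<^sup>2) powr (1 / (q - 2))"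
  defines "v2 \<equiv> B powr q / K powr (q - 2)"
  shows "c1 > 0" "v2 > 0"
    "\<sigma>\<^sup>2 / c1 = B * (\<sigma>\<^sup>2 / B\<^sup>2) powr ((q - 1) / (q - 2))"
    "c1^2 / \<sigma>\<^sup>2 = (B\<^sup>2 / \<sigma>\<^sup>2) powr (q / (q - 2))"
    "v2 / K = B powr q / K powr (q - 1)"
    "K^2 / v2 = (K / B) powr q"
    "v2 / K^2 = B powr q / K powr q"
    "c1 powr (q - 2) = B powr q / \<sigma>\<^sup>2"
proof -
  define p where "p = q - 2"
  have p: "p > 0" "q = p + 2" using q by (auto simp: p_def)
  show c1: "c1 > 0" using B s by (simp add: c1_def)
  show v2: "v2 > 0" using B K by (simp add: v2_def)
  have lc1: "ln c1 = ln B + (2 * ln B - 2 * ln \<sigma>) / p"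
    using B s unfolding c1_def p_def by (simp add: ln_mult ln_div ln_realpow)
  have lv2: "ln v2 = q * ln B - (q - 2) * ln K"
    using B K unfolding v2_def by (simp add: ln_div)
  show "\<sigma>\<^sup>2 / c1 = B * (\<sigma>\<^sup>2 / B\<^sup>2) powr ((q - 1) / (q - 2))"
    by (rule eq_by_ln) (use c1 s B lc1 p in \<open>simp_all add: ln_mult ln_div ln_realpow field_simps\<close>)
  show "c1^2 / \<sigma>\<^sup>2 = (B\<^sup>2 / \<sigma>\<^sup>2) powr (q / (q - 2))"
    by (rule eq_by_ln) (use c1 s B lc1 p in \<open>simp_all add: ln_mult ln_div ln_realpow field_simps\<close>)
  show "v2 / K = B powr q / K powr (q - 1)"
    by (rule eq_by_ln) (use v2 K B lv2 p in \<open>simp_all add: ln_mult ln_div ln_realpow field_simps\<close>)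
  show "K^2 / v2 = (K / B) powr q"
    by (rule eq_by_ln) (use v2 K B lv2 p in \<open>simp_all add: ln_mult ln_div ln_realpow field_simps\<close>)
  show "v2 / K^2 = B powr q / K powr q"
    by (rule eq_by_ln) (use v2 K B lv2 p in \<open>simp_all add: ln_mult ln_div ln_realpow field_simps\<close>)
  show "c1 powr (q - 2) = B powr q / \<sigma>\<^sup>2"
    by (rule eq_by_ln) (use c1 s B lc1 p in \<open>simp_all add: ln_mult ln_div ln_realpow field_simps\<close>)
qed

theorem theorem4p1:
  fixes M :: "'a measure" and X :: "nat \<Rightarrow> 'a \<Rightarrow> real"
    and n :: nat and q \<sigma> B K z :: real
  assumes "prob_space M"
    and "n \<ge> 1"
    and "q > 2" and "\<sigma> > 0" and "B > 0" and "K > 0"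
    and "\<And>i. i \<in> {1..n} \<Longrightarrow> X i \<in> borel_measurable M"
    and "prob_space.indep_vars M (\<lambda>_. borel) X {1..n}"
    and "\<And>i. i \<in> {1..n} \<Longrightarrow> integrable M (X i)"
    and "\<And>i. i \<in> {1..n} \<Longrightarrow> prob_space.expectation M (X i) = 0"
    and "(1 / real n) * (\<Sum>i=1..n. prob_space.variance M (X i)) \<le> \<sigma>\<^sup>2"
    and "(1 / real n) * (\<Sum>i=1..n. prob_space.expectation M (\<lambda>\<omega>. \<bar>X i \<omega>\<bar> powr q)) \<le> B powr q"
    and "AE \<omega> in M. (\<forall>i\<in>{1..n}. \<bar>X i \<omega>\<bar> \<le> K)"
    and "z > 1"
  shows "prob_space.prob M {\<omega> \<in> space M.
           (1 / real n) * (\<Sum>i=1..n. X i \<omega>) \<ge>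
             B * (\<sigma>\<^sup>2 / B\<^sup>2) powr ((q - 1) / (q - 2))
               * Psi_inv ((B\<^sup>2 / \<sigma>\<^sup>2) powr (q / (q - 2)) * (ln z / real n))
             + B powr q / K powr (q - 1) * Psi_inv ((K / B) powr q * (ln z / real n))}
         \<le> 1 / z"
proof -
  interpret P: prob_space M by (rule assms(1))
  define I where "I = {1..n}"
  have finI: "finite I" by (simp add: I_def)
  have Xm[measurable]: "X i \<in> borel_measurable M" if "i \<in> I" for i using assms(7) that by (simp add: I_def)
  define c1 where "c1 = B * (B\<^sup>2 / \<sigma>\<^sup>2) powr (1 / (q - 2))"
  define v2 where "v2 = B powr q / K powr (q - 2)"
  define L where "L = ln z / real n"
  define t where "t = B * (\<sigma>\<^sup>2 / B\<^sup>2) powr ((q - 1) / (q - 2))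
               * Psi_inv ((B\<^sup>2 / \<sigma>\<^sup>2) powr (q / (q - 2)) * (ln z / real n))
             + B powr q / K powr (q - 1) * Psi_inv ((K / B) powr q * (ln z / real n))"
  have n: "real n > 0" using assms(2) by simp
  have Lpos: "L > 0" using assms(14) n by (simp add: L_def)
  note af = alg_facts[OF assms(3,4,5,6), folded c1_def v2_def]
  have s2: "\<sigma>\<^sup>2 > 0" using assms(4) by simp
  obtain lam where lam: "lam > 0" and comb: "(\<sigma>\<^sup>2/c1^2) * (exp (lam*c1) - 1 - lam*c1) + (v2/K^2) * (exp (lam*K) - 1 - lam*K) + L
     \<le> lam * ((\<sigma>\<^sup>2/c1) * Psi_inv (c1^2 * L / \<sigma>\<^sup>2) + (v2/K) * Psi_inv (K^2 * L / v2))"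
    using combine[OF s2 af(1) af(2) assms(6) Lpos] by blast
  have tt: "(\<sigma>\<^sup>2/c1) * Psi_inv (c1^2 * L / \<sigma>\<^sup>2) + (v2/K) * Psi_inv (K^2 * L / v2) = t"
  proof -
    have "c1^2 * L / \<sigma>\<^sup>2 = (c1^2 / \<sigma>\<^sup>2) * L" "K^2 * L / v2 = (K^2/v2) * L" by simp_all
    then show ?thesis unfolding t_def af(3,4,5,6) L_def by simp
  qed
  define \<alpha> where "\<alpha> = alphaC q c1 lam"
  define \<beta> where "\<beta> = betaC q c1 K lam"
  have \<alpha>0: "\<alpha> \<ge> 0" unfolding \<alpha>_def using alphaC_nonneg assms(3) af(1) lam by simp
  have \<beta>0: "\<beta> \<ge> 0" unfolding \<beta>_def using betaC_nonneg assms(3,6) af(1) lam by simp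
  have H: "\<alpha> * \<sigma>\<^sup>2 + \<beta> * B powr q + L \<le> lam * t"
    using coef_bound[OF assms(3) s2 assms(5,6) _ af(1) af(8), of lam] lam comb tt af(7)
    unfolding \<alpha>_def \<beta>_def by simp
  have AEK: "AE \<omega> in M. \<bar>X i \<omega>\<bar> \<le> K" if i: "i \<in> I" for i
    using assms(13) by eventually_elim (use i in \<open>auto simp: I_def\<close>)
  have int_exp: "integrable M (\<lambda>\<omega>. exp (lam * X i \<omega>))" if i: "i \<in> I" for i
  proof (rule P.integrable_const_bound[where B="exp (lam*K)"])
    show "AE \<omega> in M. norm (exp (lam * X i \<omega>)) \<le> exp (lam*K)"
      using AEK[OF i] by eventually_elim (use lam in \<open>auto intro: mult_left_mono\<close>)
  qed (use i in measurable)
  have int_sq: "integrable M (\<lambda>\<omega>. (X i \<omega>)^2)" if i: "i \<in> I" for i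
  proof (rule P.integrable_const_bound[where B="K^2"])
    show "AE \<omega> in M. norm ((X i \<omega>)^2) \<le> K^2"
      using AEK[OF i] by eventually_elim (auto simp: power2_le_iff_abs_le assms(6))
  qed (use i in measurable)
  have int_pq: "integrable M (\<lambda>\<omega>. \<bar>X i \<omega>\<bar> powr q)" if i: "i \<in> I" for i
  proof (rule P.integrable_const_bound[where B="K powr q"])
    show "AE \<omega> in M. norm (\<bar>X i \<omega>\<bar> powr q) \<le> K powr q"
      using AEK[OF i] by eventually_elim (use assms(3) in \<open>auto intro: powr_mono2\<close>)
  qed (use i in measurable)
  have int_X: "integrable M (X i)" if "i \<in> I" for i using assms(9) that by (simp add: I_def)
  have EX0: "P.expectation (X i) = 0" if "i \<in> I" for i using assms(10) that by (simp add: I_def)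
  have Ei: "P.expectation (\<lambda>\<omega>. exp (lam * X i \<omega>))
      \<le> 1 + (\<alpha> * P.variance (X i) + \<beta> * P.expectation (\<lambda>\<omega>. \<bar>X i \<omega>\<bar> powr q))" if i: "i \<in> I" for i
  proof -
    have pw: "AE \<omega> in M. exp (lam * X i \<omega>) \<le> 1 + lam * X i \<omega> + \<alpha> * (X i \<omega>)^2 + \<beta> * \<bar>X i \<omega>\<bar> powr q"
      using AEK[OF i]
    proof eventually_elim
      case (elim \<omega>)
      define x where "x = X i \<omega>"
      have "exp (lam*x) - 1 - lam*x \<le> exp \<bar>lam*x\<bar> - 1 - \<bar>lam*x\<bar>"
        using exp_tail_abs[of "lam*x" 2] by (simp add: numeral_2_eq_2)
      also have "\<bar>lam*x\<bar> = lam * \<bar>x\<bar>" using lam by (simp add: abs_mult)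
      also have "exp (lam * \<bar>x\<bar>) - 1 - lam * \<bar>x\<bar> \<le> \<alpha> * \<bar>x\<bar>^2 + \<beta> * \<bar>x\<bar> powr q"
        unfolding \<alpha>_def \<beta>_def using elim lam assms(3,6) af(1) by (intro pointwise) (auto simp: x_def)
      finally show ?case by (simp add: x_def)
    qed
    have "P.expectation (\<lambda>\<omega>. exp (lam * X i \<omega>))
        \<le> P.expectation (\<lambda>\<omega>. 1 + lam * X i \<omega> + \<alpha> * (X i \<omega>)^2 + \<beta> * \<bar>X i \<omega>\<bar> powr q)"
      by (rule integral_mono_AE[OF int_exp[OF i] _ pw]) (use int_X[OF i] int_sq[OF i] int_pq[OF i] in auto)
    also have "\<dots> = 1 + lam * P.expectation (X i) + \<alpha> * P.expectation (\<lambda>\<omega>. (X i \<omega>)^2) + \<beta> * P.expectation (\<lambda>\<omega>. \<bar>X i \<omega>\<bar> powr q)"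
      using int_X[OF i] int_sq[OF i] int_pq[OF i] by (simp add: Bochner_Integration.integral_add P.prob_space)
    also have "P.variance (X i) = P.expectation (\<lambda>\<omega>. (X i \<omega>)^2)" using EX0[OF i] by simp
    ultimately show ?thesis using EX0[OF i] by simp
  qed
  define a where "a i = \<alpha> * P.variance (X i) + \<beta> * P.expectation (\<lambda>\<omega>. \<bar>X i \<omega>\<bar> powr q)" for i
  define Y where "Y = (\<lambda>i \<omega>. exp (lam * X i \<omega>))"
  have indep: "P.indep_vars (\<lambda>_. borel) Y I"
    unfolding Y_def I_def
    by (rule P.indep_vars_compose2[OF assms(8), of "\<lambda>i x. exp (lam * x)"]) measurable
  have intY: "integrable M (Y i)" if "i \<in> I" for i using int_exp[OF that] by (simp add: Y_def)
  have E_prod: "P.expectation (\<lambda>\<omega>. \<Prod>i\<in>I. Y i \<omega>) = (\<Prod>i\<in>I. P.expectation (Y i))"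
    by (rule P.indep_vars_lebesgue_integral[OF finI indep intY])
  have int_prod: "integrable M (\<lambda>\<omega>. \<Prod>i\<in>I. Y i \<omega>)"
    by (rule P.indep_vars_integrable[OF finI indep intY])
  have prodexp: "(\<Prod>i\<in>I. Y i \<omega>) = exp (lam * (\<Sum>i\<in>I. X i \<omega>))" for \<omega>
    unfolding Y_def by (simp add: exp_sum[OF finI] sum_distrib_left)
  have ev: "{\<omega> \<in> space M. (1 / real n) * (\<Sum>i=1..n. X i \<omega>) \<ge> t}
      = {\<omega> \<in> space M. (\<Prod>i\<in>I. Y i \<omega>) \<ge> exp (lam * (real n * t))}"
  proof -
    have "(1 / real n) * S \<ge> t \<longleftrightarrow> exp (lam * S) \<ge> exp (lam * (real n * t))" for S
    proof -
      have "exp (lam * S) \<ge> exp (lam * (real n * t)) \<longleftrightarrow> lam * (real n * t) \<le> lam * S" by simp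
      also have "\<dots> \<longleftrightarrow> real n * t \<le> S" using lam by simp
      also have "\<dots> \<longleftrightarrow> t \<le> S / real n" using n by (simp add: pos_le_divide_eq mult.commute)
      finally show ?thesis by simp
    qed
    then show ?thesis unfolding prodexp unfolding I_def by (simp only:)
  qed
  have Mk: "P.prob {\<omega> \<in> space M. (\<Prod>i\<in>I. Y i \<omega>) \<ge> exp (lam * (real n * t))}
      \<le> P.expectation (\<lambda>\<omega>. \<Prod>i\<in>I. Y i \<omega>) / exp (lam * (real n * t))"
    by (rule integral_Markov_inequality_measure[OF int_prod]) (auto simp: Y_def intro!: prod_nonneg)
  have E1: "P.expectation (\<lambda>\<omega>. \<Prod>i\<in>I. Y i \<omega>) \<le> (\<Prod>i\<in>I. exp (a i))"
    unfolding E_prod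
  proof (rule prod_mono)
    fix i assume i: "i \<in> I"
    have "P.expectation (Y i) \<le> 1 + a i" using Ei[OF i] by (simp add: Y_def a_def)
    also have "\<dots> \<le> exp (a i)" using exp_ge_add_one_self[of "a i"] by (simp add: add.commute)
    finally show "0 \<le> P.expectation (Y i) \<and> P.expectation (Y i) \<le> exp (a i)"
      by (simp add: Y_def)
  qed
  have E2: "(\<Prod>i\<in>I. exp (a i)) = exp (\<Sum>i\<in>I. a i)" by (simp add: exp_sum[OF finI])
  have S1: "(\<Sum>i\<in>I. P.variance (X i)) \<le> real n * \<sigma>\<^sup>2" using assms(11) n unfolding I_def
    by (simp add: field_simps)
  have S2: "(\<Sum>i\<in>I. P.expectation (\<lambda>\<omega>. \<bar>X i \<omega>\<bar> powr q)) \<le> real n * B powr q"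
    using assms(12) n unfolding I_def by (simp add: field_simps)
  have E3: "(\<Sum>i\<in>I. a i) \<le> real n * (\<alpha> * \<sigma>\<^sup>2 + \<beta> * B powr q)"
  proof -
    have "(\<Sum>i\<in>I. a i) = \<alpha> * (\<Sum>i\<in>I. P.variance (X i)) + \<beta> * (\<Sum>i\<in>I. P.expectation (\<lambda>\<omega>. \<bar>X i \<omega>\<bar> powr q))"
      by (simp add: a_def sum.distrib sum_distrib_left)
    moreover have "\<alpha> * (\<Sum>i\<in>I. P.variance (X i)) \<le> \<alpha> * (real n * \<sigma>\<^sup>2)"
      using S1 \<alpha>0 by (rule mult_left_mono)
    moreover have "\<beta> * (\<Sum>i\<in>I. P.expectation (\<lambda>\<omega>. \<bar>X i \<omega>\<bar> powr q)) \<le> \<beta> * (real n * B powr q)"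
      using S2 \<beta>0 by (rule mult_left_mono)
    ultimately show ?thesis by (simp add: algebra_simps)
  qed
  have E4: "P.expectation (\<lambda>\<omega>. \<Prod>i\<in>I. Y i \<omega>) \<le> exp (real n * (\<alpha> * \<sigma>\<^sup>2 + \<beta> * B powr q))"
    using E1 E2 E3 by (metis exp_le_cancel_iff order.trans)
  have "P.prob {\<omega> \<in> space M. (1 / real n) * (\<Sum>i=1..n. X i \<omega>) \<ge> t}
      \<le> exp (real n * (\<alpha> * \<sigma>\<^sup>2 + \<beta> * B powr q)) / exp (lam * (real n * t))"
    unfolding ev using Mk E4 by (meson divide_right_mono exp_ge_zero order.trans)
  also have "\<dots> = exp (real n * (\<alpha> * \<sigma>\<^sup>2 + \<beta> * B powr q) - lam * (real n * t))"
    by (simp add: exp_diff)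
  also have "\<dots> \<le> exp (- (real n * L))"
  proof -
    have "real n * (\<alpha> * \<sigma>\<^sup>2 + \<beta> * B powr q + L) \<le> real n * (lam * t)"
      using H n by (intro mult_left_mono) auto
    then show ?thesis by (simp add: algebra_simps)
  qed
  also have "\<dots> = 1 / z" using n assms(14) by (simp add: L_def exp_minus inverse_eq_divide)
  finally show ?thesis unfolding t_def .
qed

end
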